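(* Let $G$ be a graph on $n$ vertices with maximum vertex degree $\Delta$, and let $\epsilon\in(0,1)$. Sample $B=(1-\epsilon)\frac{n}{\Delta}$ vertices of $G$ uniformly at random, either with replacement or without replacement, and let $G'$ be the subgraph of $G$ induced by the sampled vertices. Then, with high probability, the largest connected component of $G'$ has size at most $O\!\left(\frac{\log n}{\epsilon^2}\right)$.
   Context: "With high probability" means with probability tending to $1$ as $n\to\infty$ (at least $1-n^{-\zeta}$ for a constant $\zeta$). *)

theory Defs
  imports "HOL-Probability.Probability"
begin

definition is_graph :: "nat set \<Rightarrow> (nat \<Rightarrow> nat \<Rightarrow> bool) \<Rightarrow> bool" where
  "is_graph V E \<longleftrightarrow> finite V \<and> (\<forall>x y. E x y \<longrightarrow> x \<in> V \<and> y \<in> V \<and> x \<noteq> y \<and> E y x)"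

definition max_degree :: "nat set \<Rightarrow> (nat \<Rightarrow> nat \<Rightarrow> bool) \<Rightarrow> nat" where
  "max_degree V E = Max (insert 0 ((\<lambda>v. card {u \<in> V. E v u}) ` V))"

definition induced_reach :: "(nat \<Rightarrow> nat \<Rightarrow> bool) \<Rightarrow> nat set \<Rightarrow> nat \<Rightarrow> nat \<Rightarrow> bool" where
  "induced_reach E S = (\<lambda>x y. x \<in> S \<and> y \<in> S \<and> E x y)\<^sup>*\<^sup>*"

definition induced_component :: "(nat \<Rightarrow> nat \<Rightarrow> bool) \<Rightarrow> nat set \<Rightarrow> nat \<Rightarrow> nat set" where
  "induced_component E S v = {u \<in> S. induced_reach E S v u}"

definition largest_component_size :: "(nat \<Rightarrow> nat \<Rightarrow> bool) \<Rightarrow> nat set \<Rightarrow> nat" where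
  "largest_component_size E S = Max (insert 0 ((\<lambda>v. card (induced_component E S v)) ` S))"

definition sample_size :: "nat \<Rightarrow> nat \<Rightarrow> real \<Rightarrow> nat" where
  "sample_size n \<Delta> \<epsilon> = nat \<lfloor>(1 - \<epsilon>) * real n / real \<Delta>\<rfloor>"

end

theory Submission
  imports Defs
begin


definition RR :: "(nat \<Rightarrow> nat \<Rightarrow> bool) \<Rightarrow> nat set \<Rightarrow> nat set \<Rightarrow> nat set" where
 "RR E S U = {y \<in> S. \<exists>u\<in>U. induced_reach E S u y}"

definition wt :: "real \<Rightarrow> nat set \<Rightarrow> nat set \<Rightarrow> real" where
 "wt p W S = p ^ card S * (1-p) ^ (card W - card S)"

definition Phi :: "(nat\<Rightarrow>nat\<Rightarrow>bool) \<Rightarrow> real \<Rightarrow> real \<Rightarrow> nat set \<Rightarrow> nat set \<Rightarrow> real" where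
 "Phi E p x W U = (\<Sum>S\<in>Pow W. wt p W S * x ^ card (RR E S U))"

lemma reach_notin: "induced_reach E S u y \<Longrightarrow> u \<notin> S \<Longrightarrow> y = u"
  unfolding induced_reach_def
  by (induction rule: converse_rtranclp_induct) auto

lemma reach_mono: "induced_reach E S a b \<Longrightarrow> S \<subseteq> T \<Longrightarrow> induced_reach E T a b"
  unfolding induced_reach_def
  by (induction rule: rtranclp_induct) (auto intro: rtranclp.rtrancl_into_rtrancl)

lemma reach_refl: "induced_reach E S a a"
  unfolding induced_reach_def by simp

lemma reach_step: "induced_reach E S a b \<Longrightarrow> b \<in> S \<Longrightarrow> c \<in> S \<Longrightarrow> E b c \<Longrightarrow> induced_reach E S a c"
  unfolding induced_reach_def by (auto intro: rtranclp.rtrancl_into_rtrancl)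

lemma reach_cons: "induced_reach E S b c \<Longrightarrow> a \<in> S \<Longrightarrow> b \<in> S \<Longrightarrow> E a b \<Longrightarrow> induced_reach E S a c"
  unfolding induced_reach_def by (auto intro: converse_rtranclp_into_rtranclp)

lemma RR_notin: "u \<notin> S \<Longrightarrow> RR E S U = RR E S (U - {u})"
  unfolding RR_def using reach_notin by fastforce

lemma RR_sub: "RR E S U \<subseteq> S" unfolding RR_def by auto

lemma RR_insert:
  assumes "S \<subseteq> W'" "u \<notin> W'" "u \<in> U"
  shows "RR E (insert u S) U = insert u (RR E S ((U - {u}) \<union> {z\<in>W'. E u z}))"
    (is "?L = insert u (RR E S ?U')")
proof
  have uS: "u \<notin> S" using assms by auto
  show "?L \<subseteq> insert u (RR E S ?U')"
  proof
    fix y assume "y \<in> ?L"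
    then obtain a where a: "a \<in> U" "induced_reach E (insert u S) a y" "y \<in> insert u S"
      unfolding RR_def by auto
    have "y \<in> insert u S \<longrightarrow> y = u \<or> y \<in> RR E S ?U'"
      using a(2) unfolding induced_reach_def
    proof (induction rule: rtranclp_induct)
      case base
      then show ?case using a(1) by (auto simp: RR_def intro: reach_refl)
    next
      case (step y z)
      show ?case
      proof
        assume "z \<in> insert u S"
        show "z = u \<or> z \<in> RR E S ?U'"
        proof (cases "z = u")
          case False
          hence zS: "z \<in> S" using \<open>z \<in> insert u S\<close> by auto
          from step have yy: "y = u \<or> y \<in> RR E S ?U'" and ey: "E y z" "y \<in> insert u S" by auto
          show ?thesis
          proof (cases "y = u")
            case True
            then show ?thesis using zS ey assms(1) by (auto simp: RR_def intro: reach_refl)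
          next
            case False
            then obtain b where "b \<in> ?U'" "induced_reach E S b y" "y \<in> S" using yy unfolding RR_def by auto
            then show ?thesis using zS ey by (auto simp: RR_def intro: reach_step)
          qed
        qed simp
      qed
    qed
    then show "y \<in> insert u (RR E S ?U')" using a by auto
  qed
next
  show "insert u (RR E S ?U') \<subseteq> ?L"
  proof
    fix y assume y: "y \<in> insert u (RR E S ?U')"
    show "y \<in> ?L"
    proof (cases "y = u")
      case True then show ?thesis using assms(3) by (auto simp: RR_def intro: reach_refl)
    next
      case False
      then obtain b where b: "b \<in> ?U'" "induced_reach E S b y" "y \<in> S" using y unfolding RR_def by auto
      have bS: "b \<in> S" using b reach_notin by fastforce
      show ?thesis
      proof (cases "b \<in> U")
        case True then show ?thesis using b by (auto simp: RR_def intro: reach_mono)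
      next
        case False
        hence "E u b" using b by auto
        have "induced_reach E (insert u S) b y" using b reach_mono by blast
        hence "induced_reach E (insert u S) u y" using bS \<open>E u b\<close> reach_cons by blast
        then show ?thesis using assms(3) b by (auto simp: RR_def)
      qed
    qed
  qed
qed



lemma sum_split_insert:
  assumes fin: "finite W'" and u: "u \<notin> W'"
  shows "(\<Sum>S\<in>Pow (insert u W'). wt p (insert u W') S * h S)
       = (1-p) * (\<Sum>S\<in>Pow W'. wt p W' S * h S) + p * (\<Sum>S\<in>Pow W'. wt p W' S * h (insert u S))"
proof -
  have disj: "Pow W' \<inter> insert u ` Pow W' = {}" using u by auto
  have inj: "inj_on (insert u) (Pow W')" using u unfolding inj_on_def by (metis Pow_iff insert_absorb insert_ident subsetD)
  have fP: "finite (Pow W')" using fin by simp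
  have c1: "wt p (insert u W') S = (1-p) * wt p W' S" if "S \<subseteq> W'" for S
  proof -
    have "card S \<le> card W'" using that fin card_mono by blast
    hence "card (insert u W') - card S = Suc (card W' - card S)" using fin u by simp
    thus ?thesis unfolding wt_def by simp
  qed
  have c2: "wt p (insert u W') (insert u S) = p * wt p W' S" if "S \<subseteq> W'" for S
  proof -
    have fS: "finite S" using that fin finite_subset by blast
    have "u \<notin> S" using that u by auto
    hence "card (insert u S) = Suc (card S)" using fS by simp
    moreover have "card (insert u W') = Suc (card W')" using fin u by simp
    ultimately show ?thesis unfolding wt_def by simp
  qed
  have "(\<Sum>S\<in>Pow (insert u W'). wt p (insert u W') S * h S)
      = (\<Sum>S\<in>Pow W'. wt p (insert u W') S * h S) + (\<Sum>S\<in>insert u ` Pow W'. wt p (insert u W') S * h S)"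
    unfolding Pow_insert by (rule sum.union_disjoint) (use fP disj in auto)
  also have "(\<Sum>S\<in>insert u ` Pow W'. wt p (insert u W') S * h S) = (\<Sum>S\<in>Pow W'. wt p (insert u W') (insert u S) * h (insert u S))"
    by (rule sum.reindex[OF inj, unfolded comp_def])
  also have "\<dots> = p * (\<Sum>S\<in>Pow W'. wt p W' S * h (insert u S))"
    by (simp add: sum_distrib_left c2 mult.assoc)
  also have "(\<Sum>S\<in>Pow W'. wt p (insert u W') S * h S) = (1-p) * (\<Sum>S\<in>Pow W'. wt p W' S * h S)"
    by (simp add: sum_distrib_left c1 mult.assoc)
  finally show ?thesis .
qed

lemma wt_total: "finite W \<Longrightarrow> (\<Sum>S\<in>Pow W. wt p W S) = 1"
proof (induction rule: finite_induct)
  case empty then show ?case by (simp add: wt_def)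
next
  case (insert u W)
  have "(\<Sum>S\<in>Pow (insert u W). wt p (insert u W) S * 1) = (1-p) * (\<Sum>S\<in>Pow W. wt p W S * 1) + p * (\<Sum>S\<in>Pow W. wt p W S * 1)"
    by (rule sum_split_insert) (use insert in auto)
  then show ?case using insert by simp
qed

lemma wt_nonneg: "0 \<le> p \<Longrightarrow> p \<le> 1 \<Longrightarrow> 0 \<le> wt p W S"
  unfolding wt_def by simp

lemma Phi_empty: "finite W \<Longrightarrow> Phi E p x W {} = 1"
  unfolding Phi_def RR_def using wt_total by simp

lemma Phi_rec:
  assumes "finite W" "u \<in> U" "u \<in> W"
  shows "Phi E p x W U = (1-p) * Phi E p x (W-{u}) (U-{u})
     + p * x * Phi E p x (W-{u}) ((U-{u}) \<union> {z\<in>W-{u}. E u z})"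
proof -
  let ?W' = "W - {u}"
  have W: "W = insert u ?W'" using assms by auto
  have fin: "finite ?W'" using assms by simp
  have "Phi E p x W U = (\<Sum>S\<in>Pow (insert u ?W'). wt p (insert u ?W') S * x ^ card (RR E S U))"
    unfolding Phi_def by (simp only: W[symmetric])
  also have "\<dots> = (1-p) * (\<Sum>S\<in>Pow ?W'. wt p ?W' S * x ^ card (RR E S U))
      + p * (\<Sum>S\<in>Pow ?W'. wt p ?W' S * x ^ card (RR E (insert u S) U))"
    by (rule sum_split_insert[OF fin]) simp
  also have "(\<Sum>S\<in>Pow ?W'. wt p ?W' S * x ^ card (RR E S U)) = Phi E p x ?W' (U-{u})"
    unfolding Phi_def
  proof (rule sum.cong[OF refl])
    fix S assume "S \<in> Pow ?W'"
    hence "u \<notin> S" by auto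
    then show "wt p ?W' S * x ^ card (RR E S U) = wt p ?W' S * x ^ card (RR E S (U-{u}))"
      using RR_notin[of u S E U] by metis
  qed
  also have "(\<Sum>S\<in>Pow ?W'. wt p ?W' S * x ^ card (RR E (insert u S) U))
      = x * Phi E p x ?W' ((U-{u}) \<union> {z\<in>?W'. E u z})"
    unfolding Phi_def sum_distrib_left
  proof (rule sum.cong[OF refl])
    fix S assume S: "S \<in> Pow ?W'"
    have fS: "finite S" using S fin by (auto intro: finite_subset)
    have "RR E (insert u S) U = insert u (RR E S ((U - {u}) \<union> {z\<in>?W'. E u z}))"
      by (rule RR_insert) (use S assms in auto)
    moreover have "u \<notin> RR E S ((U - {u}) \<union> {z\<in>?W'. E u z})" using RR_sub[of E S] S by auto
    moreover have "finite (RR E S ((U - {u}) \<union> {z\<in>?W'. E u z}))" using RR_sub[of E S] fS by (rule finite_subset)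
    ultimately show "wt p ?W' S * x ^ card (RR E (insert u S) U) = x * (wt p ?W' S * x ^ card (RR E S ((U - {u}) \<union> {z\<in>?W'. E u z})))"
      by simp
  qed
  finally show ?thesis by (simp add: mult.assoc)
qed



lemma Phi_bound:
  assumes V: "finite V" and deg: "\<And>y. card {z\<in>V. E y z} \<le> D"
    and sym: "\<And>a b. E a b \<Longrightarrow> E b a"
    and p: "0 \<le> p" "p \<le> 1" and x: "0 \<le> x" and g: "1 \<le> g" and D: "1 \<le> D"
    and key: "(1-p) + p*x*g^(D-1) \<le> g"
  shows "W \<subseteq> V \<Longrightarrow> U \<subseteq> W \<Longrightarrow> (\<forall>u\<in>U. card {z\<in>W. E u z} < D) \<Longrightarrow> Phi E p x W U \<le> g ^ card U"
proof (induction "card W" arbitrary: W U rule: less_induct)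
  case less
  have fW: "finite W" using less.prems(1) V by (rule finite_subset)
  show ?case
  proof (cases "U = {}")
    case True then show ?thesis using Phi_empty[OF fW] by simp
  next
    case False
    then obtain u where u: "u \<in> U" by auto
    have uW: "u \<in> W" using u less.prems by auto
    let ?W' = "W - {u}"
    let ?N = "{z\<in>?W'. E u z}"
    let ?U' = "(U-{u}) \<union> ?N"
    have fU: "finite U" using less.prems(2) fW by (rule finite_subset)
    have cW: "card ?W' < card W" using fW uW by (meson card_Diff1_less)
    have W'V: "?W' \<subseteq> V" using less.prems by auto
    have deg1: "card {z\<in>?W'. E y z} \<le> card {z\<in>W. E y z}" for y
      by (rule card_mono) (use fW in auto)
    have IH1: "Phi E p x ?W' (U-{u}) \<le> g ^ card (U-{u})"
      using less.hyps[OF cW W'V] less.prems deg1 by (meson Diff_mono Diff_subset le_less_trans order_refl subset_iff)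
    have degN: "card {y\<in>?W'. E z y} < D" if "z \<in> ?N" for z
    proof -
      have zu: "E z u" using that sym by auto
      have "{y\<in>?W'. E z y} = {y\<in>W. E z y} - {u}" by auto
      hence "card {y\<in>?W'. E z y} = card {y\<in>W. E z y} - 1" using uW zu fW by simp
      moreover have "card {y\<in>W. E z y} \<le> card {y\<in>V. E z y}" by (rule card_mono) (use V less.prems in auto)
      moreover have "card {y\<in>W. E z y} \<ge> 1"
      proof -
        have "u \<in> {y\<in>W. E z y}" using uW zu by simp
        moreover have "finite {y\<in>W. E z y}" using fW by simp
        ultimately have "card {y\<in>W. E z y} > 0" by (auto simp: card_gt_0_iff)
        thus ?thesis by simp
      qed
      ultimately show ?thesis using deg[of z] D by linarith
    qed
    have U'sub: "?U' \<subseteq> ?W'" using less.prems by auto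
    have degU': "\<forall>z\<in>?U'. card {y\<in>?W'. E z y} < D"
    proof
      fix z assume "z \<in> ?U'"
      then show "card {y\<in>?W'. E z y} < D"
      proof
        assume "z \<in> U - {u}" then show ?thesis using less.prems(3) deg1[of z] by (meson DiffD1 le_less_trans)
      next
        assume "z \<in> ?N" then show ?thesis by (rule degN)
      qed
    qed
    have IH2: "Phi E p x ?W' ?U' \<le> g ^ card ?U'"
      using less.hyps[OF cW W'V U'sub degU'] .
    have cN: "card ?N \<le> D - 1"
    proof -
      have "card ?N \<le> card {z\<in>W. E u z}" by (rule card_mono) (use fW in auto)
      moreover have "card {z\<in>W. E u z} < D" using less.prems(3) u by simp
      ultimately show ?thesis by linarith
    qed
    have cU': "card ?U' \<le> (card U - 1) + (D - 1)"
    proof -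
      have "card ?U' \<le> card (U-{u}) + card ?N" by (rule card_Un_le)
      thus ?thesis using cN fU u by simp
    qed
    have IH2': "Phi E p x ?W' ?U' \<le> g ^ (card U - 1) * g ^ (D-1)"
      using IH2 power_increasing[OF cU' g] by (simp add: power_add)
    have "card U > 0" using fU u by (auto simp: card_gt_0_iff)
    hence cU: "card U = Suc (card U - 1)" by simp
    have "Phi E p x W U = (1-p) * Phi E p x ?W' (U-{u}) + p * x * Phi E p x ?W' ?U'"
      by (rule Phi_rec[OF fW u uW])
    also have "\<dots> \<le> (1-p) * g ^ (card U - 1) + p * x * (g ^ (card U - 1) * g ^ (D-1))"
      apply (rule add_mono)
      subgoal using IH1 p fU u by (intro mult_left_mono) (simp_all add: card_Diff_singleton)
      subgoal using IH2' p x by (intro mult_left_mono) simp_all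
      done
    also have "\<dots> = g ^ (card U - 1) * ((1-p) + p*x*g^(D-1))" by (simp add: algebra_simps)
    also have "\<dots> \<le> g ^ (card U - 1) * g" using key g by (intro mult_left_mono) simp_all
    also have "\<dots> = g ^ card U" using cU by (metis power_Suc2)
    finally show ?thesis .
  qed
qed



lemma poly_ineq:
  fixes e :: real assumes "0 < e" "e < 1"
  shows "(1-e) * ((1 + e^2/8) * (1 + e/2 + e^2/4) - 1) \<le> e/2"
proof -
  have "(1-e) * ((1 + e^2/8) * (1 + e/2 + e^2/4) - 1) = e/2 - e^2/8 - 5*e^3/16 - e^4/32 - e^5/32"
    by (simp add: algebra_simps power2_eq_square power3_eq_cube power4_eq_xxxx)
      (simp add: field_simps power_def numeral_eq_Suc)
  also have "\<dots> \<le> e/2"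
  proof -
    have "0 \<le> e^2/8 + 5*e^3/16 + e^4/32 + e^5/32" using assms by simp
    thus ?thesis by linarith
  qed
  finally show ?thesis .
qed

lemma numeric_facts:
  fixes e :: real and D :: nat
  assumes e: "0 < e" "e < 1" and D: "1 \<le> D"
  defines "p \<equiv> (1-e)/D" and "g \<equiv> 1 + e/(2*D)" and "x \<equiv> 1 + e^2/8"
  shows "(1-p) + p*x*g^(D-1) \<le> g" "(1-p) + p*x*g^D \<le> 2" "0 \<le> p" "p \<le> 1" "1 \<le> g" "1 < x"
    "e^2/16 \<le> ln x"
proof -
  have Dp: "real D \<ge> 1" using D by simp
  show p0: "0 \<le> p" using e Dp unfolding p_def by simp
  show "p \<le> 1" using e Dp unfolding p_def by (simp add: divide_le_eq)
  show g1: "1 \<le> g" using e Dp unfolding g_def by simp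
  show x1: "1 < x" using e unfolding x_def by simp
  define ee where "ee = 1 + e/2 + e^2/4"
  have gD: "g^D \<le> ee"
  proof -
    have "g \<le> exp (e/(2*D))" unfolding g_def using exp_ge_add_one_self by simp
    hence "g^D \<le> exp (e/(2*D)) ^ D" using g1 by (intro power_mono) simp_all
    also have "\<dots> = exp (real D * (e/(2*D)))" by (rule exp_of_nat_mult[symmetric])
    also have "real D * (e/(2*D)) = e/2" using Dp by simp
    also have "exp (e/2) \<le> 1 + e/2 + (e/2)^2" using e by (intro exp_bound) simp_all
    also have "\<dots> = ee" unfolding ee_def by (simp add: power2_eq_square)
    finally show ?thesis .
  qed
  have gD1: "g^(D-1) \<le> g^D" using g1 by (intro power_increasing) simp_all
  have pxe: "p * (x*ee - 1) \<le> e/(2*D)"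
  proof -
    have "(1-e) * (x*ee - 1) \<le> e/2" unfolding x_def ee_def using poly_ineq[OF e] .
    hence "(1-e) * (x*ee - 1) / D \<le> (e/2) / D" using Dp by (intro divide_right_mono) simp_all
    thus ?thesis unfolding p_def by simp
  qed
  have px0: "0 \<le> p*x" using p0 x1 by simp
  have A: "(1-p) + p*x*g^D \<le> g"
  proof -
    have "(1-p) + p*x*g^D \<le> (1-p) + p*x*ee" using gD px0 by (simp add: mult_left_mono)
    also have "\<dots> = 1 + p*(x*ee - 1)" by (simp add: algebra_simps)
    also have "\<dots> \<le> g" using pxe unfolding g_def by simp
    finally show ?thesis .
  qed
  have "p*x*g^(D-1) \<le> p*x*g^D" using gD1 px0 by (rule mult_left_mono)
  thus "(1-p) + p*x*g^(D-1) \<le> g" using A by linarith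
  have "g \<le> 2" unfolding g_def using e Dp by (simp add: divide_le_eq)
  thus "(1-p) + p*x*g^D \<le> 2" using A by simp
  have e21: "e^2 \<le> 1" using e by (simp add: power_le_one)
  have "e^2/8 - (e^2/8)^2 \<le> ln (1 + e^2/8)"
    using e e21 by (intro ln_one_plus_pos_lower_bound) simp_all
  moreover have "e^2/16 \<le> e^2/8 - (e^2/8)^2"
  proof -
    have a: "(e^2/8)^2 = e^2 * e^2 / 64" by (simp add: power2_eq_square)
    have "e^2 * e^2 \<le> e^2 * 1" using e21 by (intro mult_left_mono) simp_all
    hence "(e^2/8)^2 \<le> e^2/16" unfolding a using zero_le_power2[of e] by linarith
    thus ?thesis by simp
  qed
  ultimately show "e^2/16 \<le> ln x" unfolding x_def by simp
qed



lemma Phi_root: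
  assumes V: "finite V" and deg: "\<And>y. card {z\<in>V. E y z} \<le> D"
    and sym: "\<And>a b. E a b \<Longrightarrow> E b a"
    and p: "0 \<le> p" "p \<le> 1" and x: "0 \<le> x" and g: "1 \<le> g" and D: "1 \<le> D"
    and key: "(1-p) + p*x*g^(D-1) \<le> g" and v: "v \<in> V"
  shows "Phi E p x V {v} \<le> (1-p) + p*x*g^D"
proof -
  let ?W' = "V - {v}"
  let ?N = "{z\<in>?W'. E v z}"
  have "Phi E p x V {v} = (1-p) * Phi E p x ?W' ({v}-{v}) + p * x * Phi E p x ?W' (({v}-{v}) \<union> ?N)"
    by (rule Phi_rec[OF V]) (use v in auto)
  also have "\<dots> = (1-p) + p * x * Phi E p x ?W' ?N" using V by (simp add: Phi_empty)
  also have "Phi E p x ?W' ?N \<le> g ^ card ?N"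
  proof (rule Phi_bound[OF V deg sym p x g D key])
    show "?W' \<subseteq> V" by auto
    show "?N \<subseteq> ?W'" by auto
    show "\<forall>u\<in>?N. card {z\<in>?W'. E u z} < D"
    proof
      fix z assume "z \<in> ?N"
      hence zu: "E z v" using sym by auto
      have "{y\<in>?W'. E z y} = {y\<in>V. E z y} - {v}" by auto
      hence "card {y\<in>?W'. E z y} = card {y\<in>V. E z y} - 1" using v zu V by simp
      moreover have "card {y\<in>V. E z y} \<ge> 1"
      proof -
        have "v \<in> {y\<in>V. E z y}" using v zu by simp
        moreover have "finite {y\<in>V. E z y}" using V by simp
        ultimately have "card {y\<in>V. E z y} > 0" by (auto simp: card_gt_0_iff)
        thus ?thesis by simp
      qed
      ultimately show "card {y\<in>?W'. E z y} < D" using deg[of z] D by linarith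
    qed
  qed
  also have "g ^ card ?N \<le> g ^ D"
  proof (rule power_increasing[OF _ g])
    have "card ?N \<le> card {z\<in>V. E v z}" by (rule card_mono) (use V in auto)
    thus "card ?N \<le> D" using deg[of v] by linarith
  qed
  finally show ?thesis using p x by (simp add: mult_left_mono)
qed

lemma markov_vertex:
  assumes V: "finite V" and x: "1 < x" and K: "0 \<le> K" and p: "0 \<le> p" "p \<le> 1"
  shows "(\<Sum>S\<in>Pow V. wt p V S * (if real (card (RR E S {v})) > K then 1 else 0))
     \<le> Phi E p x V {v} / exp (K * ln x)"
proof -
  have lx: "0 \<le> ln x" using x by simp
  have "(\<Sum>S\<in>Pow V. wt p V S * (if real (card (RR E S {v})) > K then 1 else 0))
      \<le> (\<Sum>S\<in>Pow V. wt p V S * (x ^ card (RR E S {v}) / exp (K * ln x)))"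
  proof (rule sum_mono)
    fix S assume "S \<in> Pow V"
    have "(if real (card (RR E S {v})) > K then 1 else 0) \<le> x ^ card (RR E S {v}) / exp (K * ln x)"
    proof (cases "real (card (RR E S {v})) > K")
      case True
      have "x ^ card (RR E S {v}) = exp (real (card (RR E S {v})) * ln x)"
        using x by (simp add: exp_of_nat_mult)
      also have "exp (K * ln x) \<le> exp (real (card (RR E S {v})) * ln x)"
        using True lx by (simp add: mult_right_mono)
      finally show ?thesis using True by simp
    next
      case False then show ?thesis using x by simp
    qed
    thus "wt p V S * (if real (card (RR E S {v})) > K then 1 else 0) \<le> wt p V S * (x ^ card (RR E S {v}) / exp (K * ln x))"
      using wt_nonneg[OF p] by (rule mult_left_mono)
  qed
  also have "\<dots> = Phi E p x V {v} / exp (K * ln x)"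
    unfolding Phi_def sum_divide_distrib by (simp add: mult.assoc)
  finally show ?thesis .
qed

lemma comp_RR: "induced_component E S v = RR E S {v}"
  unfolding induced_component_def RR_def by auto

lemma lcs_witness:
  assumes "finite S" "0 \<le> K" "real (largest_component_size E S) > K"
  shows "\<exists>v\<in>S. real (card (RR E S {v})) > K"
proof -
  let ?A = "insert 0 ((\<lambda>v. card (induced_component E S v)) ` S)"
  have "Max ?A \<in> ?A" using assms(1) by (intro Max_in) auto
  moreover have "Max ?A \<noteq> 0" using assms(2,3) unfolding largest_component_size_def by auto
  ultimately obtain v where "v \<in> S" "Max ?A = card (induced_component E S v)" by auto
  thus ?thesis using assms(3) unfolding largest_component_size_def comp_RR by auto
qed

lemma bern_bad:
  assumes V: "finite V" and deg: "\<And>y. card {z\<in>V. E y z} \<le> D"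
    and sym: "\<And>a b. E a b \<Longrightarrow> E b a" and D: "1 \<le> D"
    and e: "0 < e" "e < 1" and K: "0 \<le> K"
  shows "(\<Sum>S\<in>Pow V. wt ((1-e)/D) V S * (if real (largest_component_size E S) > K then 1 else 0))
      \<le> 2 * card V / exp (K * e^2/16)"
proof -
  define p where "p = (1-e)/D"
  define g where "g = 1 + e/(2*D)"
  define x where "x = 1 + e^2/8"
  note nf = numeric_facts[OF e D, folded p_def g_def x_def]
  have p: "0 \<le> p" "p \<le> 1" using nf by auto
  have ex: "exp (K * e^2/16) \<le> exp (K * ln x)" using mult_left_mono[OF nf(7) K] by simp
  have pv: "(\<Sum>S\<in>Pow V. wt p V S * (if real (card (RR E S {v})) > K then 1 else 0)) \<le> 2 / exp (K * e^2/16)"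
    if v: "v \<in> V" for v
  proof -
    have "Phi E p x V {v} \<le> 2"
      using Phi_root[where E=E and V=V and D=D and p=p and x=x and g=g, OF V deg sym p _ nf(5) D nf(1) v] nf(2,6) by simp
    hence "(\<Sum>S\<in>Pow V. wt p V S * (if real (card (RR E S {v})) > K then 1 else 0)) \<le> 2 / exp (K * ln x)"
      using markov_vertex[OF V nf(6) K p, of E v] by (smt (verit) divide_right_mono exp_gt_zero)
    also have "\<dots> \<le> 2 / exp (K * e^2/16)" using ex by (simp add: frac_le)
    finally show ?thesis .
  qed
  have "(\<Sum>S\<in>Pow V. wt p V S * (if real (largest_component_size E S) > K then 1 else 0))
     \<le> (\<Sum>S\<in>Pow V. \<Sum>v\<in>V. wt p V S * (if real (card (RR E S {v})) > K then 1 else 0))"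
  proof (rule sum_mono)
    fix S assume S: "S \<in> Pow V"
    have fS: "finite S" using S V by (auto intro: finite_subset)
    show "wt p V S * (if real (largest_component_size E S) > K then 1 else 0)
        \<le> (\<Sum>v\<in>V. wt p V S * (if real (card (RR E S {v})) > K then 1 else 0))"
    proof (cases "real (largest_component_size E S) > K")
      case True
      then obtain v where v: "v \<in> S" "real (card (RR E S {v})) > K" using lcs_witness[OF fS K] by blast
      have "wt p V S * (if real (card (RR E S {v})) > K then 1 else 0)
          \<le> (\<Sum>v\<in>V. wt p V S * (if real (card (RR E S {v})) > K then 1 else 0))"
        by (rule member_le_sum) (use v S V wt_nonneg[OF p] in auto)
      thus ?thesis using True v by simp
    next
      case False
      thus ?thesis using wt_nonneg[OF p] by (simp add: sum_nonneg)
    qed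
  qed
  also have "\<dots> = (\<Sum>v\<in>V. \<Sum>S\<in>Pow V. wt p V S * (if real (card (RR E S {v})) > K then 1 else 0))"
    by (rule sum.swap)
  also have "\<dots> \<le> (\<Sum>v\<in>V. 2 / exp (K * e^2/16))" by (rule sum_mono) (rule pv)
  also have "\<dots> = 2 * card V / exp (K * e^2/16)" by simp
  finally show ?thesis unfolding p_def .
qed



definition Fj :: "(nat set \<Rightarrow> bool) \<Rightarrow> nat set \<Rightarrow> nat \<Rightarrow> nat set set" where
  "Fj Q V j = {S. S \<subseteq> V \<and> card S = j \<and> Q S}"

definition upc :: "(nat set \<Rightarrow> bool) \<Rightarrow> nat set \<Rightarrow> bool" where
  "upc Q V \<longleftrightarrow> (\<forall>S T. Q S \<longrightarrow> S \<subseteq> T \<longrightarrow> T \<subseteq> V \<longrightarrow> Q T)"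

lemma finite_Fj: "finite V \<Longrightarrow> finite (Fj Q V j)"
  unfolding Fj_def by (rule finite_subset[of _ "Pow V"]) auto

lemma up_count:
  assumes V: "finite V" and up: "upc Q V" and j: "j < card V"
  shows "card (Fj Q V j) * (card V - j) \<le> card (Fj Q V (Suc j)) * Suc j"
proof -
  let ?A = "Sigma (Fj Q V j) (\<lambda>S. V - S)"
  let ?B = "Sigma (Fj Q V (Suc j)) (\<lambda>T. T)"
  have cA: "card ?A = card (Fj Q V j) * (card V - j)"
  proof -
    have "card ?A = (\<Sum>S\<in>Fj Q V j. card (V - S))"
      by (rule card_SigmaI) (use finite_Fj[OF V] V in auto)
    also have "\<dots> = (\<Sum>S\<in>Fj Q V j. card V - j)"
    proof (rule sum.cong[OF refl])
      fix S assume "S \<in> Fj Q V j"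
      hence "S \<subseteq> V" "card S = j" unfolding Fj_def by auto
      thus "card (V - S) = card V - j" using V by (simp add: card_Diff_subset finite_subset)
    qed
    finally show ?thesis by simp
  qed
  have cB: "card ?B = card (Fj Q V (Suc j)) * Suc j"
  proof -
    have "card ?B = (\<Sum>T\<in>Fj Q V (Suc j). card T)"
      by (rule card_SigmaI) (use finite_Fj[OF V] V in \<open>auto simp: Fj_def intro: finite_subset\<close>)
    also have "\<dots> = (\<Sum>T\<in>Fj Q V (Suc j). Suc j)" by (rule sum.cong) (auto simp: Fj_def)
    finally show ?thesis by simp
  qed
  have "card ?A \<le> card ?B"
  proof (rule card_inj_on_le[where f = "\<lambda>(S,x). (insert x S, x)"])
    show "inj_on (\<lambda>(S,x). (insert x S, x)) ?A"
    proof (rule inj_onI)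
      fix a b assume a: "a \<in> ?A" "b \<in> ?A" "(\<lambda>(S,x). (insert x S, x)) a = (\<lambda>(S,x). (insert x S, x)) b"
      obtain S x where ax: "a = (S,x)" by (cases a)
      obtain S' x' where bx: "b = (S',x')" by (cases b)
      from a have "x \<notin> S" "x' \<notin> S'" "insert x S = insert x' S'" "x = x'" unfolding ax bx by auto
      thus "a = b" unfolding ax bx by (metis Diff_insert_absorb)
    qed
    show "(\<lambda>(S,x). (insert x S, x)) ` ?A \<subseteq> ?B"
    proof
      fix y assume "y \<in> (\<lambda>(S,x). (insert x S, x)) ` ?A"
      then obtain S x where S: "S \<in> Fj Q V j" "x \<in> V - S" and y: "y = (insert x S, x)" by auto
      have SV: "S \<subseteq> V" "card S = j" "Q S" using S unfolding Fj_def by auto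
      have "finite S" using SV V finite_subset by auto
      hence "card (insert x S) = Suc j" using S SV by simp
      moreover have "Q (insert x S)" using up SV S unfolding upc_def by blast
      ultimately show "y \<in> ?B" using y S SV unfolding Fj_def by auto
    qed
    show "finite ?B" by (rule finite_SigmaI[OF finite_Fj[OF V]]) (use V in \<open>auto simp: Fj_def intro: finite_subset\<close>)
  qed
  thus ?thesis using cA cB by simp
qed

lemma binom_step: "j < n \<Longrightarrow> (n choose Suc j) * Suc j = (n choose j) * (n - j)"
proof -
  assume j: "j < n"
  have "Suc j * (Suc (n-1) choose Suc j) = Suc (n-1) * ((n-1) choose j)" by (rule Suc_times_binomial)
  hence "Suc j * (n choose Suc j) = n * ((n-1) choose j)" using j by simp
  also have "\<dots> = (n - j) * (n choose j)" by (rule binomial_absorb_comp[symmetric])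
  finally show ?thesis by (simp add: mult.commute)
qed

definition rr :: "(nat set \<Rightarrow> bool) \<Rightarrow> nat set \<Rightarrow> nat \<Rightarrow> real" where
  "rr Q V j = card (Fj Q V j) / real (card V choose j)"

lemma rr_step:
  assumes V: "finite V" and up: "upc Q V" and j: "j < card V"
  shows "rr Q V j \<le> rr Q V (Suc j)"
proof -
  let ?n = "card V"
  have "(card (Fj Q V j) * (?n choose Suc j)) * Suc j = card (Fj Q V j) * ((?n choose Suc j) * Suc j)"
    by (simp only: mult.assoc)
  also have "\<dots> = card (Fj Q V j) * ((?n choose j) * (?n - j))" using binom_step[OF j] by simp
  also have "\<dots> = (card (Fj Q V j) * (?n - j)) * (?n choose j)" by (simp only: ac_simps)
  also have "\<dots> \<le> (card (Fj Q V (Suc j)) * Suc j) * (?n choose j)"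
    using up_count[OF V up j] by (rule mult_right_mono) simp
  also have "\<dots> = (card (Fj Q V (Suc j)) * (?n choose j)) * Suc j" by (simp only: ac_simps)
  finally have "card (Fj Q V j) * (?n choose Suc j) \<le> card (Fj Q V (Suc j)) * (?n choose j)"
    by (simp only: mult_le_cancel2)
  hence le: "real (card (Fj Q V j)) * real (?n choose Suc j) \<le> real (card (Fj Q V (Suc j))) * real (?n choose j)"
    by (metis of_nat_le_iff of_nat_mult)
  have p1: "real (?n choose j) > 0" using j by simp
  have p2: "real (?n choose Suc j) > 0" using j by simp
  show ?thesis unfolding rr_def using le p1 p2 by (simp add: divide_le_eq le_divide_eq field_simps)
qed

lemma rr_mono:
  assumes V: "finite V" and up: "upc Q V" and "i \<le> j" "j \<le> card V"
  shows "rr Q V i \<le> rr Q V j"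
  using assms(3,4)
proof (induction j rule: dec_induct)
  case base then show ?case by simp
next
  case (step k)
  then show ?case using rr_step[OF V up, of k] by simp
qed



lemma bern_decomp:
  assumes V: "finite V"
  shows "(\<Sum>S\<in>Pow V. wt p V S * (if Q S then 1 else 0))
       = (\<Sum>j\<le>card V. real (card (Fj Q V j)) * (p^j * (1-p)^(card V - j)))"
proof -
  have "(\<Sum>S\<in>Pow V. wt p V S * (if Q S then 1 else 0)) = (\<Sum>S\<in>{S\<in>Pow V. Q S}. wt p V S)"
  proof -
    have "(\<Sum>S\<in>Pow V. wt p V S * (if Q S then 1 else 0)) = (\<Sum>S\<in>Pow V. if Q S then wt p V S else 0)"
      by (rule sum.cong) auto
    also have "\<dots> = (\<Sum>S\<in>{S\<in>Pow V. Q S}. wt p V S)" by (rule sum.inter_filter[symmetric]) (use V in simp)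
    finally show ?thesis .
  qed
  also have "\<dots> = (\<Sum>j\<le>card V. \<Sum>S\<in>{S\<in>{S\<in>Pow V. Q S}. card S = j}. wt p V S)"
    by (rule sum.group[symmetric]) (use V in \<open>auto intro: card_mono\<close>)
  also have "\<dots> = (\<Sum>j\<le>card V. real (card (Fj Q V j)) * (p^j * (1-p)^(card V - j)))"
  proof (rule sum.cong[OF refl])
    fix j
    have eq: "{S\<in>{S\<in>Pow V. Q S}. card S = j} = Fj Q V j" unfolding Fj_def by auto
    have "(\<Sum>S\<in>Fj Q V j. wt p V S) = (\<Sum>S\<in>Fj Q V j. p^j * (1-p)^(card V - j))"
      by (rule sum.cong) (auto simp: Fj_def wt_def)
    thus "(\<Sum>S\<in>{S\<in>{S\<in>Pow V. Q S}. card S = j}. wt p V S) = real (card (Fj Q V j)) * (p^j * (1-p)^(card V - j))"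
      unfolding eq by simp
  qed
  finally show ?thesis .
qed

lemma binom_mode:
  fixes p :: real
  assumes p: "0 < p" "p < 1" and B: "real B \<le> real n * p" "B \<le> n"
  shows "\<exists>m. B \<le> m \<and> m \<le> n \<and> 1 / (real n + 1) \<le> real (n choose m) * p^m * (1-p)^(n-m)"
proof -
  define t where "t j = real (n choose j) * p^j * (1-p)^(n-j)" for j
  have sum1: "(\<Sum>j\<le>n. t j) = 1"
    using binomial_ring[of p "1-p" n] unfolding t_def by simp
  have tnn: "0 \<le> t j" for j unfolding t_def using p by simp
  have stp: "t j \<le> t (Suc j)" if "Suc j \<le> B" for j
  proof -
    have jn: "j < n" using that B by simp
    have nj: "n - j = Suc (n - Suc j)" using jn by simp
    have bs: "real (n choose Suc j) * real (Suc j) = real (n choose j) * real (n - j)"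
      using binom_step[OF jn] by (metis of_nat_mult)
    have "t (Suc j) * (real (Suc j) * (1-p)) = real (n choose Suc j) * real (Suc j) * p^(Suc j) * (1-p)^(Suc (n - Suc j))"
      unfolding t_def by (simp add: algebra_simps)
    also have "\<dots> = real (n choose j) * real (n - j) * p * p^j * (1-p)^(n - j)"
      unfolding bs nj by (simp add: algebra_simps)
    also have "\<dots> = t j * (real (n - j) * p)" unfolding t_def by (simp add: algebra_simps)
    finally have eq: "t (Suc j) * (real (Suc j) * (1-p)) = t j * (real (n - j) * p)" .
    have "real (Suc j) * (1-p) \<le> real (n - j) * p"
    proof -
      have "real (n - j) = real n - real j" using jn by simp
      moreover have "real j + 1 \<le> real n * p" using that B by simp
      ultimately show ?thesis using p by (simp add: algebra_simps)
    qed
    hence "t j * (real (Suc j) * (1-p)) \<le> t j * (real (n - j) * p)" using tnn by (intro mult_left_mono) simp_all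
    hence "t j * (real (Suc j) * (1-p)) \<le> t (Suc j) * (real (Suc j) * (1-p))" using eq by simp
    moreover have "real (Suc j) * (1-p) > 0" using p by simp
    ultimately show ?thesis using mult_le_cancel_right_pos by blast
  qed
  have low: "t j \<le> t B" if "j \<le> B" for j
    using that
  proof (induction j rule: inc_induct)
    case base then show ?case by simp
  next
    case (step k) then show ?case using stp[of k] by simp
  qed
  obtain m where m: "m \<in> {B..n}" "\<forall>j\<in>{B..n}. t j \<le> t m"
  proof -
    have "finite (t ` {B..n})" "t ` {B..n} \<noteq> {}" using B by auto
    hence "Max (t ` {B..n}) \<in> t ` {B..n}" by (rule Max_in)
    then obtain m where "m \<in> {B..n}" "t m = Max (t ` {B..n})" by auto
    moreover have "\<forall>j\<in>{B..n}. t j \<le> Max (t ` {B..n})" by simp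
    ultimately show ?thesis using that by auto
  qed
  have all: "t j \<le> t m" if "j \<le> n" for j
  proof (cases "j \<le> B")
    case True
    have "B \<in> {B..n}" using B by simp
    hence "t B \<le> t m" using m(2) by blast
    then show ?thesis using low[OF True] by linarith
  next
    case False then show ?thesis using m that by simp
  qed
  have "1 = (\<Sum>j\<le>n. t j)" using sum1 by simp
  also have "\<dots> \<le> (\<Sum>j\<le>n. t m)" by (rule sum_mono) (use all in simp)
  also have "\<dots> = (real n + 1) * t m" by simp
  finally have "1 / (real n + 1) \<le> t m" by (simp add: divide_le_eq mult.commute)
  thus ?thesis using m unfolding t_def by auto
qed

lemma wo_bound:
  assumes V: "finite V" and up: "upc Q V" and p: "0 < p" "p < 1"
    and B: "real B \<le> real (card V) * p" "B \<le> card V"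
  shows "rr Q V B \<le> (real (card V) + 1) * (\<Sum>S\<in>Pow V. wt p V S * (if Q S then 1 else 0))"
proof -
  let ?n = "card V"
  obtain m where m: "B \<le> m" "m \<le> ?n" "1 / (real ?n + 1) \<le> real (?n choose m) * p^m * (1-p)^(?n-m)"
    using binom_mode[OF p B] by blast
  have r0: "0 \<le> rr Q V B" unfolding rr_def by simp
  have "rr Q V B / (real ?n + 1) \<le> rr Q V m * (real (?n choose m) * p^m * (1-p)^(?n-m))"
  proof -
    have "rr Q V B * (1 / (real ?n + 1)) \<le> rr Q V B * (real (?n choose m) * p^m * (1-p)^(?n-m))"
      using m(3) r0 by (rule mult_left_mono)
    also have "\<dots> \<le> rr Q V m * (real (?n choose m) * p^m * (1-p)^(?n-m))"
      using rr_mono[OF V up m(1,2)] p by (intro mult_right_mono) simp_all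
    finally show ?thesis by simp
  qed
  also have "\<dots> = real (card (Fj Q V m)) * (p^m * (1-p)^(?n - m))"
    unfolding rr_def using m(2) by (simp add: field_simps)
  also have "\<dots> \<le> (\<Sum>j\<le>?n. real (card (Fj Q V j)) * (p^j * (1-p)^(?n - j)))"
    by (rule member_le_sum[where f = "\<lambda>j. real (card (Fj Q V j)) * (p^j * (1-p)^(?n - j))"]) (use m p in auto)
  also have "\<dots> = (\<Sum>S\<in>Pow V. wt p V S * (if Q S then 1 else 0))" by (rule bern_decomp[OF V, symmetric])
  finally show ?thesis by (simp add: divide_le_eq mult.commute)
qed



lemma s_le:
  assumes h: "bij_betw h T1 T2" and I: "finite I" and T2: "finite T2"
  shows "card {f\<in>PiE I (\<lambda>_. T1). f ` I = T1} \<le> card {f\<in>PiE I (\<lambda>_. T2). f ` I = T2}"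
proof (rule card_inj_on_le[where f = "\<lambda>f. restrict (h \<circ> f) I"])
  have inj: "inj_on h T1" and im: "h ` T1 = T2" using h by (auto simp: bij_betw_def)
  show "inj_on (\<lambda>f. restrict (h \<circ> f) I) {f\<in>PiE I (\<lambda>_. T1). f ` I = T1}"
  proof (rule inj_onI)
    fix f g assume f: "f \<in> {f\<in>PiE I (\<lambda>_. T1). f ` I = T1}" and g: "g \<in> {f\<in>PiE I (\<lambda>_. T1). f ` I = T1}"
      and eq: "restrict (h \<circ> f) I = restrict (h \<circ> g) I"
    show "f = g"
    proof (rule PiE_ext)
      show "f \<in> PiE I (\<lambda>_. T1)" "g \<in> PiE I (\<lambda>_. T1)" using f g by auto
      fix i assume i: "i \<in> I"
      have "h (f i) = h (g i)" using fun_cong[OF eq, of i] i by simp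
      moreover have "f i \<in> T1" "g i \<in> T1" using f g i by (auto simp: PiE_iff)
      ultimately show "f i = g i" using inj by (meson inj_onD)
    qed
  qed
  show "(\<lambda>f. restrict (h \<circ> f) I) ` {f\<in>PiE I (\<lambda>_. T1). f ` I = T1} \<subseteq> {f\<in>PiE I (\<lambda>_. T2). f ` I = T2}"
  proof
    fix F assume "F \<in> (\<lambda>f. restrict (h \<circ> f) I) ` {f\<in>PiE I (\<lambda>_. T1). f ` I = T1}"
    then obtain f where f: "f \<in> PiE I (\<lambda>_. T1)" "f ` I = T1" and F: "F = restrict (h \<circ> f) I" by auto
    have "F \<in> PiE I (\<lambda>_. T2)" unfolding F using f im by (auto simp: PiE_iff)
    moreover have "F ` I = T2"
    proof -
      have "F ` I = h ` (f ` I)" unfolding F by auto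
      thus ?thesis using f im by simp
    qed
    ultimately show "F \<in> {f\<in>PiE I (\<lambda>_. T2). f ` I = T2}" by simp
  qed
  show "finite {f\<in>PiE I (\<lambda>_. T2). f ` I = T2}" using I T2 by (simp add: finite_PiE)
qed

lemma s_sym:
  assumes I: "finite I" and T: "finite T1" "finite T2" "card T1 = card T2"
  shows "card {f\<in>PiE I (\<lambda>_. T1). f ` I = T1} = card {f\<in>PiE I (\<lambda>_. T2). f ` I = T2}"
proof -
  obtain h where h: "bij_betw h T1 T2" using bij_betw_iff_card[OF T(1,2)] T(3) by blast
  have h': "bij_betw (inv_into T1 h) T2 T1" using h by (rule bij_betw_inv_into)
  show ?thesis using s_le[OF h I T(2)] s_le[OF h' I T(1)] by simp
qed

definition sc :: "nat set \<Rightarrow> nat \<Rightarrow> nat set \<Rightarrow> nat" where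
  "sc V B T = card {f\<in>PiE {..<B} (\<lambda>_. V). f ` {..<B} = T}"

lemma sc_alt: "T \<subseteq> V \<Longrightarrow> sc V B T = card {f\<in>PiE {..<B} (\<lambda>_. T). f ` {..<B} = T}"
  unfolding sc_def by (rule arg_cong[where f=card]) (auto simp: PiE_iff)

lemma count_group:
  assumes V: "finite V"
  shows "card {f\<in>PiE {..<B} (\<lambda>_. V). P (f ` {..<B})} = (\<Sum>T\<in>{T\<in>Pow V. P T}. sc V B T)"
proof -
  let ?X = "{f\<in>PiE {..<B} (\<lambda>_. V). P (f ` {..<B})}"
  have fX: "finite ?X" using V by (simp add: finite_PiE)
  have "card ?X = (\<Sum>f\<in>?X. 1)" by simp
  also have "\<dots> = (\<Sum>T\<in>{T\<in>Pow V. P T}. \<Sum>f\<in>{f\<in>?X. f ` {..<B} = T}. 1)"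
    by (rule sum.group[symmetric]) (use fX V in \<open>auto simp: PiE_iff\<close>)
  also have "\<dots> = (\<Sum>T\<in>{T\<in>Pow V. P T}. sc V B T)"
  proof (rule sum.cong[OF refl])
    fix T assume T: "T \<in> {T\<in>Pow V. P T}"
    have "{f\<in>?X. f ` {..<B} = T} = {f\<in>PiE {..<B} (\<lambda>_. V). f ` {..<B} = T}" using T by auto
    thus "(\<Sum>f\<in>{f\<in>?X. f ` {..<B} = T}. 1) = sc V B T" unfolding sc_def by simp
  qed
  finally show ?thesis .
qed

lemma group_card:
  assumes V: "finite V"
  shows "(\<Sum>T\<in>{T\<in>Pow V. P T}. h T) = (\<Sum>j\<le>card V. \<Sum>T\<in>Fj P V j. h T)"
proof -
  have "(\<Sum>T\<in>{T\<in>Pow V. P T}. h T) = (\<Sum>j\<le>card V. \<Sum>T\<in>{T\<in>{T\<in>Pow V. P T}. card T = j}. h T)"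
    by (rule sum.group[symmetric]) (use V in \<open>auto intro: card_mono\<close>)
  also have "\<dots> = (\<Sum>j\<le>card V. \<Sum>T\<in>Fj P V j. h T)"
    by (rule sum.cong[OF refl], rule sum.cong) (auto simp: Fj_def)
  finally show ?thesis .
qed

lemma wr_bound:
  assumes V: "finite V" and R: "0 \<le> R" and hr: "\<And>j. j \<le> B \<Longrightarrow> j \<le> card V \<Longrightarrow> rr Q V j \<le> R"
  shows "real (card {f\<in>PiE {..<B} (\<lambda>_. V). Q (f ` {..<B})}) \<le> R * real (card V) ^ B"
proof -
  let ?n = "card V"
  have piece: "real (\<Sum>T\<in>Fj Q V j. sc V B T) \<le> R * real (\<Sum>T\<in>Fj (\<lambda>_. True) V j. sc V B T)"
    if j: "j \<le> ?n" for j
  proof (cases "j \<le> B")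
    case False
    have "sc V B T = 0" if "T \<in> Fj Q V j" for T
    proof -
      have "card T = j" using that by (auto simp: Fj_def)
      have ee: "{f\<in>PiE {..<B} (\<lambda>_. V). f ` {..<B} = T} = {}"
      proof (rule ccontr)
        assume "{f\<in>PiE {..<B} (\<lambda>_. V). f ` {..<B} = T} \<noteq> {}"
        then obtain f where "f ` {..<B} = T" by auto
        hence "card T \<le> B" using card_image_le[of "{..<B}" f] by simp
        thus False using \<open>card T = j\<close> False by simp
      qed
      show ?thesis unfolding sc_def ee by simp
    qed
    hence "(\<Sum>T\<in>Fj Q V j. sc V B T) = 0" by simp
    thus ?thesis using R by (simp add: sum_nonneg)
  next
    case True
    have cA: "card (Fj (\<lambda>_. True) V j) = ?n choose j" unfolding Fj_def using n_subsets[OF V] by simp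
    hence "card (Fj (\<lambda>_. True) V j) > 0" using j by simp
    hence "Fj (\<lambda>_. True) V j \<noteq> {}" by auto
    then obtain T0 where T0: "T0 \<in> Fj (\<lambda>_. True) V j" by auto
    have const: "sc V B T = sc V B T0" if "T \<subseteq> V" "card T = j" for T
    proof -
      have T0V: "T0 \<subseteq> V" "card T0 = j" using T0 by (auto simp: Fj_def)
      have fT: "finite T" using that(1) V by (rule finite_subset)
      have fT0: "finite T0" using T0V(1) V by (rule finite_subset)
      have "sc V B T = card {f\<in>PiE {..<B} (\<lambda>_. T). f ` {..<B} = T}" by (rule sc_alt[OF that(1)])
      also have "\<dots> = card {f\<in>PiE {..<B} (\<lambda>_. T0). f ` {..<B} = T0}"
        by (rule s_sym) (use fT fT0 that T0V in auto)
      also have "\<dots> = sc V B T0" by (rule sc_alt[symmetric, OF T0V(1)])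
      finally show ?thesis .
    qed
    have e1: "(\<Sum>T\<in>Fj Q V j. sc V B T) = card (Fj Q V j) * sc V B T0"
      using const by (simp add: Fj_def)
    have e2: "(\<Sum>T\<in>Fj (\<lambda>_. True) V j. sc V B T) = (?n choose j) * sc V B T0"
      using const cA by (simp add: Fj_def)
    have "real (card (Fj Q V j)) = rr Q V j * real (?n choose j)"
      unfolding rr_def using j by simp
    also have "\<dots> \<le> R * real (?n choose j)" using hr[OF True j] by (simp add: mult_right_mono)
    finally have "real (card (Fj Q V j)) * real (sc V B T0) \<le> R * real (?n choose j) * real (sc V B T0)"
      by (simp add: mult_right_mono)
    thus ?thesis unfolding e1 e2 by (simp add: mult.assoc)
  qed
  have "real (card {f\<in>PiE {..<B} (\<lambda>_. V). Q (f ` {..<B})}) = real (\<Sum>j\<le>?n. \<Sum>T\<in>Fj Q V j. sc V B T)"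
    unfolding count_group[OF V] group_card[OF V] ..
  also have "\<dots> = (\<Sum>j\<le>?n. real (\<Sum>T\<in>Fj Q V j. sc V B T))" by simp
  also have "\<dots> \<le> (\<Sum>j\<le>?n. R * real (\<Sum>T\<in>Fj (\<lambda>_. True) V j. sc V B T))"
    by (rule sum_mono) (use piece in simp)
  also have "\<dots> = R * real (\<Sum>j\<le>?n. \<Sum>T\<in>Fj (\<lambda>_. True) V j. sc V B T)"
    by (simp add: sum_distrib_left)
  also have "(\<Sum>j\<le>?n. \<Sum>T\<in>Fj (\<lambda>_. True) V j. sc V B T) = card {f\<in>PiE {..<B} (\<lambda>_. V). True}"
    unfolding count_group[OF V, of B "\<lambda>_. True"] group_card[OF V] ..
  also have "card {f\<in>PiE {..<B} (\<lambda>_. V). True} = ?n ^ B" by (simp add: card_PiE)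
  finally show ?thesis by simp
qed



lemma lcs_mono:
  assumes "S \<subseteq> T" "finite T"
  shows "largest_component_size E S \<le> largest_component_size E T"
  unfolding largest_component_size_def
proof (rule Max.boundedI)
  show "finite (insert 0 ((\<lambda>v. card (induced_component E S v)) ` S))"
    using assms finite_subset by auto
  show "insert 0 ((\<lambda>v. card (induced_component E S v)) ` S) \<noteq> {}" by simp
  fix a assume "a \<in> insert 0 ((\<lambda>v. card (induced_component E S v)) ` S)"
  then show "a \<le> Max (insert 0 ((\<lambda>v. card (induced_component E T v)) ` T))"
  proof
    assume "a = 0" then show ?thesis by simp
  next
    assume "a \<in> (\<lambda>v. card (induced_component E S v)) ` S"
    then obtain v where v: "v \<in> S" "a = card (induced_component E S v)" by auto
    have "induced_component E S v \<subseteq> induced_component E T v"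
      unfolding induced_component_def using assms(1) reach_mono by blast
    moreover have "finite (induced_component E T v)" using assms(2) unfolding induced_component_def by simp
    ultimately have "a \<le> card (induced_component E T v)" using v card_mono by metis
    also have "\<dots> \<le> Max (insert 0 ((\<lambda>v. card (induced_component E T v)) ` T))"
      using v assms by (intro Max_ge) auto
    finally show ?thesis .
  qed
qed

lemma main_rr:
  assumes G: "is_graph V E" and n2: "card V \<ge> 2" and e: "0 < e" "e < 1"
  defines "K \<equiv> 96 * ln (real (card V)) / e^2"
  defines "Q \<equiv> (\<lambda>S. real (largest_component_size E S) > K)"
  defines "B \<equiv> sample_size (card V) (max_degree V E) e"
  shows "rr Q V B \<le> 1 / real (card V)" "B \<le> card V" "upc Q V"
proof -
  let ?n = "card V"
  let ?D = "max_degree V E"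
  have V: "finite V" using G unfolding is_graph_def by simp
  have sym: "\<And>a b. E a b \<Longrightarrow> E b a" using G unfolding is_graph_def by blast
  have deg: "card {z\<in>V. E y z} \<le> ?D" for y
  proof (cases "y \<in> V")
    case True
    then show ?thesis unfolding max_degree_def using V by (intro Max_ge) auto
  next
    case False
    hence ee: "{z\<in>V. E y z} = {}" using G unfolding is_graph_def by blast
    show ?thesis unfolding ee by simp
  qed
  have K0: "0 \<le> K" unfolding K_def using n2 by simp
  show up: "upc Q V" unfolding upc_def Q_def
  proof (intro allI impI)
    fix S T assume a: "K < real (largest_component_size E S)" "S \<subseteq> T" "T \<subseteq> V"
    have "finite T" using a(3) V by (rule finite_subset)
    hence "largest_component_size E S \<le> largest_component_size E T" using a(2) lcs_mono by blast
    thus "K < real (largest_component_size E T)" using a(1) by linarith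
  qed
  have nr: "real ?n \<ge> 2" using n2 by simp
  have main: "rr Q V B \<le> 1 / real ?n \<and> B \<le> ?n"
  proof (cases "?D = 0")
    case True
    hence B0: "B = 0" unfolding B_def sample_size_def by simp
    have "Fj Q V 0 = {}"
    proof -
      have "\<not> Q {}" unfolding Q_def largest_component_size_def using K0 by simp
      moreover have "S = {}" if "S \<subseteq> V" "card S = 0" for S using that V finite_subset by fastforce
      ultimately show ?thesis unfolding Fj_def by auto
    qed
    then show ?thesis unfolding rr_def B0 by simp
  next
    case False
    hence D1: "1 \<le> ?D" by simp
    define p where "p = (1-e)/?D"
    have p: "0 < p" "p < 1" unfolding p_def using e D1
      by (simp_all add: divide_less_eq)
    have Bp: "real B \<le> real ?n * p"
    proof -
      have "real B = real (nat \<lfloor>(1-e) * real ?n / real ?D\<rfloor>)" unfolding B_def sample_size_def by simp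
      also have "\<dots> \<le> (1-e) * real ?n / real ?D" using e by (simp add: of_nat_nat)
      finally show ?thesis unfolding p_def by (simp add: mult.commute)
    qed
    have Bn: "B \<le> ?n"
    proof -
      have "real ?n * p \<le> real ?n" using p by (simp add: mult_left_le)
      thus ?thesis using Bp by linarith
    qed
    have b1: "rr Q V B \<le> (real ?n + 1) * (\<Sum>S\<in>Pow V. wt p V S * (if Q S then 1 else 0))"
      by (rule wo_bound[OF V up p Bp Bn])
    have b2: "(\<Sum>S\<in>Pow V. wt p V S * (if Q S then 1 else 0)) \<le> 2 * ?n / exp (K * e^2/16)"
      unfolding p_def Q_def by (rule bern_bad[OF V deg sym D1 e K0])
    have b4: "exp (K * e^2/16) = real ?n ^ 6"
    proof -
      have "K * e^2/16 = 6 * ln (real ?n)" unfolding K_def using e by simp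
      hence "exp (K * e^2/16) = exp (ln (real ?n)) ^ 6" by (simp add: exp_of_nat_mult[symmetric])
      thus ?thesis using nr by simp
    qed
    have b3: "(real ?n + 1) * (2 * real ?n / real ?n ^ 6) \<le> 1 / real ?n"
    proof -
      have "(real ?n + 1) * (2 * real ?n) * real ?n \<le> real ?n ^ 6"
      proof -
        have "(real ?n + 1) * (2 * real ?n) * real ?n \<le> (3/2 * real ?n) * (2 * real ?n) * real ?n"
          using nr by (intro mult_right_mono) simp_all
        also have "\<dots> = 3 * real ?n ^ 3" by (simp add: power3_eq_cube)
        also have "\<dots> \<le> real ?n ^ 3 * real ?n ^ 3"
        proof -
          have "(2::real)^3 \<le> real ?n ^ 3" using nr by (intro power_mono) simp_all
          thus ?thesis using nr by (intro mult_right_mono) simp_all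
        qed
        also have "\<dots> = real ?n ^ 6" by (simp flip: power_add)
        finally show ?thesis .
      qed
      thus ?thesis using nr by (simp add: field_simps)
    qed
    have "rr Q V B \<le> (real ?n + 1) * (2 * real ?n / real ?n ^ 6)"
      using b1 mult_left_mono[OF b2[unfolded b4], of "real ?n + 1"] by simp
    thus ?thesis using b3 Bn by linarith
  qed
  then show "rr Q V B \<le> 1 / real (card V)" "B \<le> card V" by auto
qed



lemma final_one:
  assumes G: "is_graph V E" and n2: "card V \<ge> 2" and e: "0 < e" "e < 1"
  shows "let n = card V;
            B = sample_size n (max_degree V E) e;
            K = 96 * ln (real n) / e\<^sup>2
        in
          measure_pmf.prob (pmf_of_set {S. S \<subseteq> V \<and> card S = B})
              {S. real (largest_component_size E S) \<le> K} \<ge> 1 - real n powr (-1)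
          \<and>
          measure_pmf.prob (pmf_of_set (PiE {..<B} (\<lambda>_. V)))
              {f. real (largest_component_size E (f ` {..<B})) \<le> K} \<ge> 1 - real n powr (-1)"
proof -
  define n where "n = card V"
  define K where "K = 96 * ln (real n) / e^2"
  define Q where "Q = (\<lambda>S. real (largest_component_size E S) > K)"
  define B where "B = sample_size n (max_degree V E) e"
  have mr: "rr Q V B \<le> 1 / real n" "B \<le> n" "upc Q V"
    using main_rr[OF G n2 e] unfolding n_def K_def Q_def B_def by auto
  have V: "finite V" using G unfolding is_graph_def by simp
  have nr: "real n \<ge> 2" using n2 unfolding n_def by simp
  have pw: "real n powr (-1) = 1 / real n" using nr by (simp add: powr_minus_divide)
  have r0: "0 \<le> rr Q V B" unfolding rr_def by simp
  let ?A = "{S. S \<subseteq> V \<and> card S = B}"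
  have cA: "card ?A = n choose B" using n_subsets[OF V] unfolding n_def by simp
  have cA0: "(n choose B) > 0" using mr(2) by simp
  have fA: "finite ?A" by (rule finite_subset[of _ "Pow V"]) (use V in auto)
  have neA: "?A \<noteq> {}" using cA cA0 by (metis card.empty less_irrefl)
  have eqA: "?A \<inter> {S. real (largest_component_size E S) \<le> K} = ?A - Fj Q V B"
    unfolding Fj_def Q_def by auto
  have cAg: "card (?A \<inter> {S. real (largest_component_size E S) \<le> K}) = (n choose B) - card (Fj Q V B)"
    unfolding eqA using cA finite_Fj[OF V, of Q B] by (subst card_Diff_subset) (auto simp: Fj_def)
  have FleA: "card (Fj Q V B) \<le> n choose B"
    using cA fA by (metis (no_types, lifting) Fj_def card_mono mem_Collect_eq subsetI)
  have P1: "measure_pmf.prob (pmf_of_set ?A) {S. real (largest_component_size E S) \<le> K} = 1 - rr Q V B"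
  proof -
    have "measure_pmf.prob (pmf_of_set ?A) {S. real (largest_component_size E S) \<le> K}
      = real (card (?A \<inter> {S. real (largest_component_size E S) \<le> K})) / real (card ?A)"
      by (rule measure_pmf_of_set[OF neA fA])
    also have "\<dots> = real ((n choose B) - card (Fj Q V B)) / real (n choose B)" by (simp only: cAg cA)
    also have "\<dots> = 1 - rr Q V B" unfolding rr_def n_def[symmetric]
      using FleA cA0 by (simp add: of_nat_diff diff_divide_distrib)
    finally show ?thesis .
  qed
  let ?P = "PiE {..<B} (\<lambda>_. V)"
  have fP: "finite ?P" using V by (simp add: finite_PiE)
  have Vne: "V \<noteq> {}" using n2 unfolding n_def by auto
  have neP: "?P \<noteq> {}" using Vne by (simp add: PiE_eq_empty_iff)
  have cP: "card ?P = n ^ B" unfolding n_def by (simp add: card_PiE)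
  let ?bad = "{f\<in>?P. Q (f ` {..<B})}"
  have wr: "real (card ?bad) \<le> rr Q V B * real n ^ B"
    unfolding n_def by (rule wr_bound[OF V r0]) (use rr_mono[OF V mr(3)] mr(2) n_def in auto)
  have eqP: "?P \<inter> {f. real (largest_component_size E (f ` {..<B})) \<le> K} = ?P - ?bad"
    unfolding Q_def by (rule set_eqI) (simp add: not_less, blast)
  have cbad: "card ?bad \<le> card ?P" using fP by (rule card_mono) (rule subsetI, simp)
  have cPg: "card (?P \<inter> {f. real (largest_component_size E (f ` {..<B})) \<le> K}) = card ?P - card ?bad"
    unfolding eqP by (rule card_Diff_subset) (use fP in \<open>simp_all add: finite_subset\<close>)
  have npos: "real n ^ B > 0" using nr by simp
  have P2: "measure_pmf.prob (pmf_of_set ?P) {f. real (largest_component_size E (f ` {..<B})) \<le> K} \<ge> 1 - rr Q V B"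
  proof -
    have "measure_pmf.prob (pmf_of_set ?P) {f. real (largest_component_size E (f ` {..<B})) \<le> K}
        = (real (n ^ B) - real (card ?bad)) / real n ^ B"
      unfolding measure_pmf_of_set[OF neP fP] cPg using cbad cP by (simp add: of_nat_diff)
    also have "\<dots> \<ge> 1 - rr Q V B"
    proof -
      have "real (card ?bad) / real n ^ B \<le> rr Q V B" using wr npos by (simp add: divide_le_eq)
      moreover have "(real (n ^ B) - real (card ?bad)) / real n ^ B = 1 - real (card ?bad) / real n ^ B"
        using npos by (simp add: diff_divide_distrib)
      ultimately show ?thesis by linarith
    qed
    finally show ?thesis .
  qed
  show ?thesis unfolding Let_def n_def[symmetric] K_def[symmetric] B_def[symmetric]
    using P1 P2 mr(1) pw by auto
qed


theorem theorem3:
  "\<exists>C::real. C > 0 \<and> (\<exists>\<zeta>::real. \<zeta> > 0 \<and> (\<exists>n0::nat.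
     \<forall>(V::nat set) (E::nat \<Rightarrow> nat \<Rightarrow> bool) (\<epsilon>::real).
       is_graph V E \<longrightarrow> card V \<ge> n0 \<longrightarrow> 0 < \<epsilon> \<longrightarrow> \<epsilon> < 1 \<longrightarrow>
       (let n = card V;
            B = sample_size n (max_degree V E) \<epsilon>;
            K = C * ln (real n) / \<epsilon>\<^sup>2
        in
          \<comment> \<open>without replacement: uniformly random B-subset of V\<close>
          measure_pmf.prob (pmf_of_set {S. S \<subseteq> V \<and> card S = B})
              {S. real (largest_component_size E S) \<le> K} \<ge> 1 - real n powr (-\<zeta>)
          \<and>
          \<comment> \<open>with replacement: B i.i.d. uniform vertices\<close>
          measure_pmf.prob (pmf_of_set (PiE {..<B} (\<lambda>_. V)))
              {f. real (largest_component_size E (f ` {..<B})) \<le> K} \<ge> 1 - real n powr (-\<zeta>))))"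
  apply (rule exI[of _ 96], rule conjI, simp)
  apply (rule exI[of _ 1], rule conjI, simp)
  apply (rule exI[of _ 2])
  apply (intro allI impI)
  apply (rule final_one)
     apply assumption+
  done

end
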